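(* Let $G=(V,E)$ be a graph, $c\ge1$, $\epsilon\in[0,1/3)$, let $\kappa(G)=(V,\kappa(E))$ be an $(\epsilon,c)$-kernel of $G$ with tight nodes $\kappa_T(V)$, and let $M$ be a matching in $\kappa(G)$ such that every augmenting path in $\kappa(G)$ with respect to $M$ has length at least five. Let $F_T$ be the set of tight nodes unmatched in $M$. Then for every edge $(u,v)\in M$, $$\big|(\kappa(\mathcal N_u)\cap F_T)\cup(\kappa(\mathcal N_v)\cap F_T)\big|\le(1+\epsilon)c.$$
   Context: Let $\mathcal N_v$ denote the set of neighbors of $v$ in $G$. A subgraph $\kappa(G)=(V,\kappa(E))$ with $\kappa(E)\subseteq E$ is given, together with a partition of $V$ into tight nodes $\kappa_T(V)$ and slack nodes $\kappa_S(V)$. For $v\in V$ let $\kappa(\mathcal N_v)=\{u\in\mathcal N_v:(u,v)\in\kappa(E)\}$ (the friends of $v$). For $c\ge1$ and $\epsilon\in[0,1/3)$, $\kappa(G)$ is an $(\epsilon,c)$-kernel of $G$ (w.r.t. this partition) iff: (i) $|\kappa(\mathcal N_v)|\le(1+\epsilon)c$ for all $v\in V$; (ii) $|\kappa(\mathcal N_v)|\ge(1-\epsilon)c$ for all $v\in\kappa_T(V)$; (iii) for all $u,v\in\kappa_S(V)$, if $(u,v)\in E$ then $(u,v)\in\kappa(E)$. Given a matching $M$ in a graph $H$, an augmenting path of length $2k+1$ ($k \ge 0$) is a simple path in $H$ with $2k+1$ edges whose two end nodes are unmatched in $M$ and whose edges alternate between non-$M$ and $M$ edges (first and last edges not in $M$).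 *)

theory Defs
  imports Complex_Main
begin

definition graph :: "'a set \<Rightarrow> 'a set set \<Rightarrow> bool" where
  "graph V E \<longleftrightarrow> finite V \<and> (\<forall>e\<in>E. \<exists>u v. e = {u, v} \<and> u \<noteq> v \<and> u \<in> V \<and> v \<in> V)"

definition nbrs :: "'a set set \<Rightarrow> 'a \<Rightarrow> 'a set" where
  "nbrs E v = {u. {u, v} \<in> E}"

text \<open>(eps,c)-kernel KE of (V,E) w.r.t. the partition of V into tight nodes T and slack nodes S.\<close>
definition is_kernel :: "'a set \<Rightarrow> 'a set set \<Rightarrow> 'a set set \<Rightarrow> 'a set \<Rightarrow> 'a set \<Rightarrow> real \<Rightarrow> real \<Rightarrow> bool" where
  "is_kernel V E KE T S eps c \<longleftrightarrow>
     KE \<subseteq> E \<and> T \<union> S = V \<and> T \<inter> S = {} \<and>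
     (\<forall>v\<in>V. real (card (nbrs KE v)) \<le> (1 + eps) * c) \<and>
     (\<forall>v\<in>T. real (card (nbrs KE v)) \<ge> (1 - eps) * c) \<and>
     (\<forall>u\<in>S. \<forall>v\<in>S. {u, v} \<in> E \<longrightarrow> {u, v} \<in> KE)"

definition matching :: "'a set set \<Rightarrow> 'a set set \<Rightarrow> bool" where
  "matching H M \<longleftrightarrow> M \<subseteq> H \<and> (\<forall>e1\<in>M. \<forall>e2\<in>M. e1 \<noteq> e2 \<longrightarrow> e1 \<inter> e2 = {})"

definition matched :: "'a set set \<Rightarrow> 'a \<Rightarrow> bool" where
  "matched M v \<longleftrightarrow> (\<exists>e\<in>M. v \<in> e)"

text \<open>An augmenting path in the graph with edge set H w.r.t. M, given as the list of its
  nodes; its length (number of edges) is length p - 1 = 2k+1.\<close>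
definition augmenting_path :: "'a set set \<Rightarrow> 'a set set \<Rightarrow> 'a list \<Rightarrow> bool" where
  "augmenting_path H M p \<longleftrightarrow>
     (\<exists>k. length p = 2 * k + 2) \<and> distinct p \<and>
     (\<forall>i < length p - 1. {p ! i, p ! Suc i} \<in> H \<and>
        ({p ! i, p ! Suc i} \<in> M \<longleftrightarrow> odd i)) \<and>
     \<not> matched M (hd p) \<and> \<not> matched M (last p)"

end

theory Submission
  imports Defs
begin

theorem lemma3p13:
  fixes V :: "'a set" and E KE M :: "'a set set" and T S :: "'a set" and eps c :: real
  assumes "graph V E"
    and "c \<ge> 1" and "0 \<le> eps" and "eps < 1/3"
    and "is_kernel V E KE T S eps c"
    and "matching KE M"
    and "\<forall>p. augmenting_path KE M p \<longrightarrow> length p - 1 \<ge> 5"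
    and "{u, v} \<in> M"
  shows "real (card ((nbrs KE u \<inter> {x\<in>T. \<not> matched M x}) \<union> (nbrs KE v \<inter> {x\<in>T. \<not> matched M x})))
           \<le> (1 + eps) * c"
proof -
  define F where "F = {x\<in>T. \<not> matched M x}"
  define A where "A = nbrs KE u \<inter> F"
  define B where "B = nbrs KE v \<inter> F"
  have KE: "KE \<subseteq> E" using assms(5) unfolding is_kernel_def by auto
  have MKE: "M \<subseteq> KE" using assms(6) unfolding matching_def by auto
  have uvE: "{u,v} \<in> E" using assms(8) MKE KE by auto
  have fin: "finite V" using assms(1) unfolding graph_def by auto
  have uvV: "u \<in> V" "v \<in> V" "u \<noteq> v" using uvE assms(1) unfolding graph_def
    by (auto simp: doubleton_eq_iff)
  have nbV: "nbrs KE w \<subseteq> V" for w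
  proof
    fix x assume "x \<in> nbrs KE w"
    then have "{x,w} \<in> E" using KE unfolding nbrs_def by auto
    then show "x \<in> V" using assms(1) unfolding graph_def by (auto simp: doubleton_eq_iff)
  qed
  have degv: "real (card (nbrs KE w)) \<le> (1 + eps) * c" if "w \<in> V" for w
    using assms(5) that unfolding is_kernel_def by auto
  have mu: "matched M u" "matched M v" using assms(8) unfolding matched_def by auto
  have key: False if a: "a \<in> A" and b: "b \<in> B" and ab: "a \<noteq> b" for a b
  proof -
    have au: "{a,u} \<in> KE" "\<not> matched M a" using a unfolding A_def F_def nbrs_def by auto
    have bv: "{b,v} \<in> KE" "\<not> matched M b" using b unfolding B_def F_def nbrs_def by auto
    have ne: "a \<noteq> u" "a \<noteq> v" "b \<noteq> u" "b \<noteq> v" using au(2) bv(2) mu by auto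
    have nM: "{a,u} \<notin> M" "{v,b} \<notin> M" using au(2) bv(2) unfolding matched_def by auto
    define p where "p = [a,u,v,b]"
    have "augmenting_path KE M p"
      unfolding augmenting_path_def
    proof (intro conjI)
      show "\<exists>k. length p = 2 * k + 2" by (rule exI[of _ 1]) (simp add: p_def)
      show "distinct p" using ne ab uvV(3) by (auto simp: p_def)
      show "\<forall>i<length p - 1. {p ! i, p ! Suc i} \<in> KE \<and> ({p ! i, p ! Suc i} \<in> M) = odd i"
      proof (intro allI impI)
        fix i assume "i < length p - 1"
        then have "i < 3" by (simp add: p_def)
        then have "i = 0 \<or> i = 1 \<or> i = 2" by linarith
        moreover have "{a,u} \<in> KE \<and> ({a,u} \<in> M) = odd (0::nat)" using au nM by simp
        moreover have "{u,v} \<in> KE \<and> ({u,v} \<in> M) = odd (1::nat)" using assms(8) MKE by auto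
        moreover have "{v,b} \<in> KE \<and> ({v,b} \<in> M) = odd (2::nat)" using bv nM by (simp add: insert_commute)
        ultimately show "{p ! i, p ! Suc i} \<in> KE \<and> ({p ! i, p ! Suc i} \<in> M) = odd i"
          by (auto simp: p_def numeral_2_eq_2)
      qed
      show "\<not> matched M (hd p)" using au by (simp add: p_def)
      show "\<not> matched M (last p)" using bv by (simp add: p_def)
    qed
    then have "length p - 1 \<ge> 5" using assms(7) by blast
    then show False by (simp add: p_def)
  qed
  have finA: "finite A" "finite B" unfolding A_def B_def using nbV fin
    by (meson finite_Int finite_subset)+
  have "real (card (A \<union> B)) \<le> (1 + eps) * c"
  proof (cases "A = {}")
    case True
    have "card B \<le> card (nbrs KE v)"
      using nbV fin unfolding B_def by (meson Int_lower1 card_mono finite_subset)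
    then show ?thesis using True degv[OF uvV(2)] by simp
  next
    case False
    then obtain a where a: "a \<in> A" by auto
    show ?thesis
    proof (cases "B = {}")
      case True
      have "card A \<le> card (nbrs KE u)"
        using nbV fin unfolding A_def by (meson Int_lower1 card_mono finite_subset)
      then show ?thesis using True degv[OF uvV(1)] by simp
    next
      case False
      then obtain b where b: "b \<in> B" by auto
      have "a = b" using key a b by blast
      have "A \<union> B \<subseteq> {a}"
      proof
        fix x assume "x \<in> A \<union> B"
        then show "x \<in> {a}" using key a b \<open>a = b\<close> by blast
      qed
      then have "card (A \<union> B) \<le> card {a}" by (intro card_mono) auto
      then have "real (card (A \<union> B)) \<le> 1" by simp
      also have "1 \<le> (1 + eps) * c" using assms(2,3)
        by (simp add: distrib_right order_trans[of 1 c] mult_nonneg_nonneg)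
      finally show ?thesis .
    qed
  qed
  then show ?thesis unfolding A_def B_def F_def .
qed

end
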